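(* Let $m,a,b,t\in\mathbb{N}$ with $m\geq 3$, $a\geq 1$, $t\in\{2,\ldots,m-1\}$ and $(t-1)(am+1)<bm+t<t(am+1)$, let $S=\langle m,\ am+1,\ bm+t\rangle$ (a MANS-semigroup with embedding dimension $3$), $q=\left\lfloor\frac{m-1}{t}\right\rfloor$ and $r=(m-1)\bmod t$. Then \[ \{q(bm+t)+r(am+1)\}\subseteq \mathrm{Maximals}_{\leq_S}(\mathrm{Ap}(S,m))\subseteq\{(q-1)(bm+t)+(t-1)(am+1),\ q(bm+t)+r(am+1)\} \] and, consequently, \[ \{q(bm+t)+r(am+1)-m\}\subseteq\mathrm{PF}(S)\subseteq\{(q-1)(bm+t)+(t-1)(am+1)-m,\ q(bm+t)+r(am+1)-m\}. \]
   Context: $\mathbb{N}=\{0,1,2,\ldots\}$. $\langle A\rangle$ is the submonoid of $(\mathbb{N},+)$ generated by $A$; a numerical semigroup is a submonoid of $\mathbb{N}$ with finite complement. For $n\in S\setminus\{0\}$, $\mathrm{Ap}(S,n)=\{s\in S:s-n\notin S\}$. On $\mathbb{Z}$, $x\leq_S y$ means $y-x\in S$ (a partial order); $\mathrm{Maximals}_{\leq_S}(X)$ is the set of maximal elements of $X$ for $\leq_S$. A pseudo-Frobenius number of $S$ is an $x\in\mathbb{Z}\setminus S$ with $x+s\in S$ for all $s\in S\setminus\{0\}$; $\mathrm{PF}(S)$ is the set of them. A MANS-semigroup is a numerical semigroup with $w(1)<\cdots<w(\mathrm{m}(S)-1)$, where $\mathrm{m}(S)$ is the least element of $S\setminus\{0\}$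 and $w(i)$ the least element of $S$ congruent to $i$ modulo $\mathrm{m}(S)$. $a\bmod b$ is the remainder of the division of $a$ by $b$. *)

theory Defs
  imports Main
begin

inductive_set monoid_gen :: "int set \<Rightarrow> int set" for A :: "int set" where
  zero: "0 \<in> monoid_gen A"
| add: "a \<in> A \<Longrightarrow> s \<in> monoid_gen A \<Longrightarrow> a + s \<in> monoid_gen A"

definition Apery :: "int set \<Rightarrow> int \<Rightarrow> int set" where
  "Apery S n = {s \<in> S. s - n \<notin> S}"

definition leq_S :: "int set \<Rightarrow> int \<Rightarrow> int \<Rightarrow> bool" where
  "leq_S S x y \<longleftrightarrow> y - x \<in> S"

definition Maximals :: "int set \<Rightarrow> int set \<Rightarrow> int set" where
  "Maximals S X = {x \<in> X. \<forall>y\<in>X. leq_S S x y \<longrightarrow> y = x}"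

definition PF :: "int set \<Rightarrow> int set" where
  "PF S = {x. x \<notin> S \<and> (\<forall>s\<in>S - {0}. x + s \<in> S)}"

end

theory Submission
  imports Defs
begin

lemma mg_add: "s \<in> monoid_gen A \<Longrightarrow> s' \<in> monoid_gen A \<Longrightarrow> s + s' \<in> monoid_gen A"
  by (induction s rule: monoid_gen.induct) (auto simp: add.assoc intro: monoid_gen.add)

lemma mg_gen: "g \<in> A \<Longrightarrow> g \<in> monoid_gen A"
  using monoid_gen.add[of g A 0] monoid_gen.zero by simp

lemma mg_mult: "g \<in> A \<Longrightarrow> int k * g \<in> monoid_gen A"
proof (induction k)
  case 0 then show ?case by (simp add: monoid_gen.zero)
next
  case (Suc k)
  have "int (Suc k) * g = g + int k * g" by (simp add: algebra_simps)
  then show ?case using Suc monoid_gen.add by metis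
qed

lemma G1:
  assumes cl: "\<And>x y. x \<in> S \<Longrightarrow> y \<in> S \<Longrightarrow> x + y \<in> S" and mS: "m \<in> S"
    and x: "x \<in> PF S" and m0: "m \<noteq> 0"
  shows "x + m \<in> Maximals S (Apery S m)"
proof -
  have xS: "x \<notin> S" and xs: "\<And>s. s \<in> S \<Longrightarrow> s \<noteq> 0 \<Longrightarrow> x + s \<in> S" using x by (auto simp: PF_def)
  have ap: "x + m \<in> Apery S m" using xS xs[OF mS m0] by (simp add: Apery_def)
  show ?thesis unfolding Maximals_def
  proof (safe intro!: ap)
    fix y assume y: "y \<in> Apery S m" "leq_S S (x + m) y"
    then have s: "y - (x+m) \<in> S" by (simp add: leq_S_def)
    show "y = x + m"
    proof (rule ccontr)
      assume "y \<noteq> x + m"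
      then have "x + (y - (x+m)) \<in> S" using xs[OF s] by simp
      then have "y - m \<in> S" by (simp add: algebra_simps)
      then show False using y by (simp add: Apery_def)
    qed
  qed
qed

lemma G2:
  assumes cl: "\<And>x y. x \<in> S \<Longrightarrow> y \<in> S \<Longrightarrow> x + y \<in> S"
    and y: "y \<in> Maximals S (Apery S m)"
  shows "y - m \<in> PF S"
proof -
  have yA: "y \<in> S" "y - m \<notin> S" and mx: "\<And>z. z \<in> Apery S m \<Longrightarrow> leq_S S y z \<Longrightarrow> z = y"
    using y by (auto simp: Maximals_def Apery_def)
  show ?thesis unfolding PF_def
  proof (intro CollectI conjI ballI)
    show "y - m \<notin> S" using yA by simp
  next
    fix s assume "s \<in> S - {0}"
    then have s: "s \<in> S" "s \<noteq> 0" by auto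
    show "y - m + s \<in> S"
    proof (rule ccontr)
      assume "y - m + s \<notin> S"
      then have "y + s \<in> Apery S m" using cl[OF yA(1) s(1)] by (simp add: Apery_def algebra_simps)
      moreover have "leq_S S y (y + s)" using s by (simp add: leq_S_def)
      ultimately have "y + s = y" using mx by blast
      then show False using s by simp
    qed
  qed
qed

locale L =
  fixes m a b t :: nat
  assumes m3: "m \<ge> 3" and a1: "a \<ge> 1" and t2: "2 \<le> t" and tm: "t \<le> m - 1"
    and lo: "(t - 1) * (a * m + 1) < b * m + t" and hi: "b * m + t < t * (a * m + 1)"
begin

definition n1 :: int where "n1 = int (a*m+1)"
definition n2 :: int where "n2 = int (b*m+t)"
definition SS where "SS = monoid_gen {int m, n1, n2}"
definition v :: "nat \<Rightarrow> int" where "v N = int (N mod t) * n1 + int (N div t) * n2"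

lemma dvd_lt_eq: "int m dvd (int N - int N') \<Longrightarrow> N < m \<Longrightarrow> N' < m \<Longrightarrow> N = N'"
proof (rule ccontr)
  assume d: "int m dvd (int N - int N')" and l: "N < m" "N' < m" and ne: "N \<noteq> N'"
  show False
  proof (cases "N < N'")
    case True
    have "int m dvd (int N' - int N)" using d by (metis dvd_diff_commute)
    then have "int m \<le> int N' - int N" using True by (intro zdvd_imp_le) auto
    then show False using l by simp
  next
    case False
    then have "int m \<le> int N - int N'" using d ne by (intro zdvd_imp_le) auto
    then show False using l by simp
  qed
qed

lemma n1_pos: "n1 > 0"
proof -
  have "(0::int) \<le> int a * int m" by simp
  moreover have "n1 = 1 + int a * int m" by (simp add: n1_def)
  ultimately show ?thesis by linarith
qed

lemma hi': "n2 < int t * n1"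
  using hi unfolding n1_def n2_def by (metis of_nat_less_iff of_nat_mult)
lemma lo': "int (t-1) * n1 < n2"
  using lo unfolding n1_def n2_def by (metis of_nat_less_iff of_nat_mult)

lemma v_eq: "e < t \<Longrightarrow> v (e + d*t) = int e * n1 + int d * n2"
  using t2 by (simp add: v_def)

lemma v_add_t: "v (N + z*t) = v N + int z * n2"
  using t2 by (simp add: v_def algebra_simps)

lemma v_le: "v N \<le> int N * n1"
proof -
  have N: "int N = int (N mod t) + int (N div t) * int t"
    by (metis of_nat_add of_nat_mult mod_div_mult_eq)
  have "int (N div t) * n2 \<le> int (N div t) * (int t * n1)"
    using hi' by (intro mult_left_mono) auto
  then show ?thesis unfolding v_def N by (simp add: algebra_simps)
qed

lemma v_le_rep: "v (y + z*t) \<le> int y * n1 + int z * n2"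
  using v_add_t[of y z] v_le[of y] by simp

lemma v_Suc: "v N < v (Suc N)"
proof -
  define e d where "e = N mod t" "d = N div t"
  have et: "e < t" using t2 e_d_def by simp
  have N: "N = e + d*t" using e_d_def by simp
  show ?thesis
  proof (cases "e + 1 < t")
    case True
    have "v (Suc N) = v ((e+1) + d*t)" using N by simp
    also have "\<dots> = int (e+1) * n1 + int d * n2" using v_eq True by blast
    finally show ?thesis using v_eq[OF et, of d] N n1_pos by (simp add: algebra_simps)
  next
    case False
    then have e: "e = t - 1" using et by simp
    have "v (Suc N) = v (0 + (d+1)*t)" using N e t2 by simp
    also have "\<dots> = int (d+1) * n2" using v_eq[of 0 "d+1"] t2 by simp
    finally show ?thesis using v_eq[OF et, of d] N e lo' by (simp add: algebra_simps)
  qed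
qed

lemma v_mono: "strict_mono v"
  using v_Suc strict_mono_Suc_iff by blast

lemma v_mod: "v N = int N + int m * (int a * int (N mod t) + int b * int (N div t))"
proof -
  have N: "int N = int (N mod t) + int (N div t) * int t"
    by (metis of_nat_add of_nat_mult mod_div_mult_eq)
  show ?thesis unfolding v_def n1_def n2_def N by (simp add: algebra_simps)
qed

lemma S_rep: "s \<in> SS \<Longrightarrow> \<exists>x y z. s = int x * int m + int y * n1 + int z * n2"
  unfolding SS_def
proof (induction s rule: monoid_gen.induct)
  case zero
  then show ?case by (rule exI[of _ 0], rule exI[of _ 0], rule exI[of _ 0]) simp
next
  case (add g s)
  then obtain x y z where s: "s = int x * int m + int y * n1 + int z * n2" by blast
  from add(1) consider "g = int m" | "g = n1" | "g = n2" by blast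
  then show ?case
  proof cases
    case 1 then show ?thesis using s
      by (intro exI[of _ "x+1"] exI[of _ y] exI[of _ z]) (simp add: algebra_simps)
  next
    case 2 then show ?thesis using s
      by (intro exI[of _ x] exI[of _ "y+1"] exI[of _ z]) (simp add: algebra_simps)
  next
    case 3 then show ?thesis using s
      by (intro exI[of _ x] exI[of _ y] exI[of _ "z+1"]) (simp add: algebra_simps)
  qed
qed

lemma S_add: "x \<in> SS \<Longrightarrow> y \<in> SS \<Longrightarrow> x + y \<in> SS"
  unfolding SS_def by (rule mg_add)

lemma m_S: "int k * int m \<in> SS" unfolding SS_def by (rule mg_mult) simp
lemma n1_S: "int k * n1 \<in> SS" unfolding SS_def by (rule mg_mult) simp
lemma n2_S: "int k * n2 \<in> SS" unfolding SS_def by (rule mg_mult) simp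

lemma S_nonneg: "s \<in> SS \<Longrightarrow> s \<ge> 0"
  using S_rep[of s] by (auto simp: n1_def n2_def)

lemma v_S: "v N \<in> SS"
  unfolding v_def using S_add n1_S n2_S by blast

lemma K: assumes "s \<in> SS" shows "\<exists>N j. N < m \<and> j \<ge> 0 \<and> s = v N + j * int m"
proof -
  obtain x y z where s: "s = int x * int m + int y * n1 + int z * n2" using S_rep assms by blast
  define N where "N = y + z*t"
  define N0 where "N0 = N mod m"
  have m0: "m > 0" using m3 by simp
  have N0m: "N0 < m" using m0 N0_def by simp
  have le1: "v N \<le> int y * n1 + int z * n2" using v_le_rep N_def by simp
  have le2: "v N0 \<le> v N" using v_mono N0_def strict_mono_less_eq by (metis mod_le_divisor mod_less_eq_dividend)
  have "int x * int m \<ge> 0" by simp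
  then have nonneg: "s - v N0 \<ge> 0" using le1 le2 s by linarith
  have sN: "s = int N + int m * (int x + int y * int a + int z * int b)"
    unfolding s N_def n1_def n2_def by (simp add: algebra_simps)
  have NN0: "int N = int N0 + int m * int (N div m)"
    unfolding N0_def by (metis of_nat_add of_nat_mult mod_mult_div_eq add.commute)
  have "int m dvd (s - v N0)"
    unfolding sN v_mod[of N0] NN0 by (simp add: algebra_simps)
  then obtain j where j: "s - v N0 = int m * j" by (elim dvdE)
  have "j \<ge> 0" using nonneg j m0 by (simp add: zero_le_mult_iff)
  then show ?thesis using j N0m by (intro exI[of _ N0] exI[of _ j]) (simp add: algebra_simps)
qed

lemma Ap_sub: "s \<in> Apery SS (int m) \<Longrightarrow> \<exists>N<m. s = v N"
proof -
  assume A: "s \<in> Apery SS (int m)"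
  then have "s \<in> SS" by (simp add: Apery_def)
  then obtain N j where Nj: "N < m" "j \<ge> 0" "s = v N + j * int m" using K by blast
  show ?thesis
  proof (cases "j = 0")
    case True then show ?thesis using Nj by auto
  next
    case False
    then have eq: "s - int m = v N + int (nat (j-1)) * int m" using Nj by (simp add: algebra_simps)
    have "s - int m \<in> SS" unfolding eq by (rule S_add[OF v_S m_S])
    then show ?thesis using A by (simp add: Apery_def)
  qed
qed

lemma v_Ap: assumes "N < m" shows "v N \<in> Apery SS (int m)"
proof -
  have "v N - int m \<notin> SS"
  proof
    assume "v N - int m \<in> SS"
    then obtain N' j where Nj: "N' < m" "j \<ge> 0" "v N - int m = v N' + j * int m" using K by blast
    have "int N - int N' = int m * (int a * int (N' mod t) + int b * int (N' div t) + j + 1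
              - (int a * int (N mod t) + int b * int (N div t)))"
      using Nj(3) unfolding v_mod[of N] v_mod[of N'] by (simp add: algebra_simps)
    then have "int m dvd (int N - int N')" by simp
    then have "N = N'" using assms Nj(1)
      by (rule dvd_lt_eq)
    then have "j * int m = - int m" using Nj(3) by simp
    moreover have "j * int m \<ge> 0" using Nj(2) by simp
    ultimately show False using m3 by linarith
  qed
  then show ?thesis using v_S by (simp add: Apery_def)
qed

lemma Max1: "v (m-1) \<in> Maximals SS (Apery SS (int m))"
  unfolding Maximals_def
proof (intro CollectI conjI ballI impI)
  show "v (m-1) \<in> Apery SS (int m)" using v_Ap m3 by simp
next
  fix y assume y: "y \<in> Apery SS (int m)" "leq_S SS (v (m-1)) y"
  then obtain N where N: "N < m" "y = v N" using Ap_sub by blast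
  have "y - v (m-1) \<in> SS" using y by (simp add: leq_S_def)
  then have "y - v (m-1) \<ge> 0" using S_nonneg by blast
  then have "v (m-1) \<le> v N" using N by simp
  then have "m - 1 \<le> N" using v_mono strict_mono_less_eq by blast
  then have "N = m - 1" using N(1) by arith
  then show "y = v (m-1)" using N by simp
qed

lemma Max2: assumes y: "y \<in> Maximals SS (Apery SS (int m))"
  shows "y = v (m-1) \<or> y = v ((m-1) div t * t - 1)"
proof (rule ccontr)
  assume ne: "\<not> ?thesis"
  have yA: "y \<in> Apery SS (int m)" and mx: "\<And>z. z \<in> Apery SS (int m) \<Longrightarrow> leq_S SS y z \<Longrightarrow> z = y"
    using y by (auto simp: Maximals_def)
  obtain M where M: "M < m" "y = v M" using Ap_sub yA by blast
  define e d where "e = M mod t" "d = M div t"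
  have et: "e < t" using t2 e_d_def by simp
  have Md: "M = e + d*t" using e_d_def by simp
  have M1: "M \<noteq> m - 1" and M2: "M \<noteq> (m-1) div t * t - 1" using ne M by auto
  have Mm: "M + 1 < m" using M(1) M1 by simp
  have "\<exists>M'. M' < m \<and> M' \<noteq> M \<and> v M' - v M \<in> SS"
  proof (cases "e + 1 < t")
    case True
    have "v (M+1) = v ((e+1) + d*t)" using Md by simp
    also have "\<dots> = v M + n1" using v_eq[OF True, of d] v_eq[OF et, of d] Md by (simp add: algebra_simps)
    finally show ?thesis using Mm n1_S[of 1] by (intro exI[of _ "M+1"]) simp
  next
    case False
    then have e: "e = t - 1" using et by simp
    show ?thesis
    proof (cases "M + t < m")
      case True
      then show ?thesis using v_add_t[of M 1] n2_S[of 1] t2 by (intro exI[of _ "M+t"]) simp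
    next
      case False
      define q where "q = (m-1) div t"
      have q1: "q * t \<le> m - 1" unfolding q_def using div_mult_mod_eq[of "m-1" t] by linarith
      have q2: "m - 1 < (q+1) * t"
      proof -
        have "(m-1) mod t < t" using t2 by simp
        moreover have "(q+1) * t = q * t + t" by simp
        ultimately show ?thesis unfolding q_def using div_mult_mod_eq[of "m-1" t] by linarith
      qed
      have Mt: "M + 1 = (d+1) * t" using Md e t2 by simp
      have a1: "(d+1) * t < (q+1) * t" using Mt Mm q2 by linarith
      have a2: "q * t < (d+2) * t" using Mt False q1 by simp
      have "d + 1 < q + 1" using a1 mult_less_cancel2 by blast
      moreover have "q < d + 2" using a2 mult_less_cancel2 by blast
      ultimately have "q = d + 1" by simp
      then have "M = (m-1) div t * t - 1" using Mt q_def by simp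
      then show ?thesis using M2 by simp
    qed
  qed
  then obtain M' where M': "M' < m" "M' \<noteq> M" "v M' - v M \<in> SS" by blast
  have "v M' = y" using mx[OF v_Ap[OF M'(1)]] M' M by (simp add: leq_S_def)
  then have "M' = M" using M v_mono strict_mono_eq by metis
  then show False using M' by simp
qed

lemma val1: "v (m-1) = int ((m-1) div t * (b * m + t) + (m-1) mod t * (a * m + 1))"
proof -
  obtain qq rr where qr: "qq = (m-1) div t" "rr = (m-1) mod t" by blast
  have rt: "rr < t" using qr t2 by simp
  have "m - 1 = rr + qq * t" using qr by simp
  then have "v (m-1) = v (rr + qq * t)" by simp
  also have "\<dots> = int rr * n1 + int qq * n2" using rt by (rule v_eq)
  also have "\<dots> = int (qq * (b * m + t) + rr * (a * m + 1))" unfolding n1_def n2_def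
    by (simp only: of_nat_add of_nat_mult algebra_simps)
  finally show ?thesis using qr by simp
qed

lemma val2: "v ((m-1) div t * t - 1) = (int ((m-1) div t) - 1) * int (b * m + t) + int (t - 1) * int (a * m + 1)"
proof -
  have q: "(m-1) div t \<ge> 1" using tm t2 by (simp add: div_greater_zero_iff Suc_le_eq)
  have "(m-1) div t * t - 1 = (t - 1) + ((m-1) div t - 1) * t"
  proof -
    obtain k where k: "(m-1) div t = k + 1" using q by (metis le_add_diff_inverse2)
    have "(k+1) * t = t + k * t" by simp
    then show ?thesis unfolding k using t2 by simp
  qed
  then have "v ((m-1) div t * t - 1) = v ((t - 1) + ((m-1) div t - 1) * t)" by simp
  also have "\<dots> = int (t - 1) * n1 + int ((m-1) div t - 1) * n2" using t2 by (intro v_eq) simp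
  finally show ?thesis using q by (simp add: n1_def n2_def of_nat_diff algebra_simps)
qed

end

theorem lemma3p20:
  fixes m a b t :: nat
  assumes "m \<ge> 3" "a \<ge> 1" "2 \<le> t" "t \<le> m - 1"
    and "(t - 1) * (a * m + 1) < b * m + t" "b * m + t < t * (a * m + 1)"
  defines "S \<equiv> monoid_gen {int m, int (a * m + 1), int (b * m + t)}"
    and "q \<equiv> (m - 1) div t" and "r \<equiv> (m - 1) mod t"
  shows "{int (q * (b * m + t) + r * (a * m + 1))} \<subseteq> Maximals S (Apery S (int m))
         \<and> Maximals S (Apery S (int m)) \<subseteq>
             {(int q - 1) * int (b * m + t) + int (t - 1) * int (a * m + 1),
              int (q * (b * m + t) + r * (a * m + 1))}
         \<and> {int (q * (b * m + t) + r * (a * m + 1)) - int m} \<subseteq> PF S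
         \<and> PF S \<subseteq>
             {(int q - 1) * int (b * m + t) + int (t - 1) * int (a * m + 1) - int m,
              int (q * (b * m + t) + r * (a * m + 1)) - int m}"
proof -
  interpret L m a b t by unfold_locales (use assms in auto)
  have SS: "S = SS" by (simp add: S_def SS_def n1_def n2_def)
  have cl: "\<And>x y. x \<in> S \<Longrightarrow> y \<in> S \<Longrightarrow> x + y \<in> S" using S_add SS by simp
  have mS: "int m \<in> S" using m_S[of 1] SS by simp
  have m0: "int m \<noteq> 0" using assms(1) by simp
  define P1 where "P1 = (int q - 1) * int (b * m + t) + int (t - 1) * int (a * m + 1)"
  define P2 where "P2 = int (q * (b * m + t) + r * (a * m + 1))"
  have v1: "v (m-1) = P2" unfolding P2_def q_def r_def by (rule val1)
  have v2: "v ((m-1) div t * t - 1) = P1" unfolding P1_def q_def by (rule val2)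
  have A: "{P2} \<subseteq> Maximals S (Apery S (int m))"
    using Max1 v1 SS by simp
  have B: "Maximals S (Apery S (int m)) \<subseteq> {P1, P2}"
  proof
    fix y assume "y \<in> Maximals S (Apery S (int m))"
    then have "y = v (m-1) \<or> y = v ((m-1) div t * t - 1)" using Max2 SS by simp
    then show "y \<in> {P1, P2}" using v1 v2 by blast
  qed
  have C: "{P2 - int m} \<subseteq> PF S"
    using G2[OF cl] A by blast
  have D: "PF S \<subseteq> {P1 - int m, P2 - int m}"
  proof
    fix x assume "x \<in> PF S"
    then have "x + int m \<in> Maximals S (Apery S (int m))" using G1[OF cl mS _ m0] by blast
    then have "x + int m = P1 \<or> x + int m = P2" using B by blast
    then have "x = P1 - int m \<or> x = P2 - int m" by linarith
    then show "x \<in> {P1 - int m, P2 - int m}" by blast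
  qed
  show ?thesis unfolding P1_def[symmetric] P2_def[symmetric] using A B C D by (intro conjI)
qed

end
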